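(* In the lower-bound instance for CTS-G described in the context, for any round $t>T/2$ and any sub-optimal base arm $a\in B_t$, we have $\Pr(w_{a,t}\ge\tau\mid\mathcal{F}_{t-1})\ge0.15$, where $\tau:=\Delta+\Delta/4$.
   Context: Top-$m$ instance: $N$ base arms with $N\ge400m$, $m\ge1$; every round any $m$ of the $N$ arms may be played. A set $G\subset[N]$ with $|G|=m$ is fixed; rewards are deterministic: $r_a=\Delta$ for $a\in G$ and $r_a=0$ otherwise, with $\Delta:=\frac45\sqrt{\frac{N\ln T}{T}}$ and $T>\frac{16}{25}N\ln T$. The agent runs CTS-G with $\gamma=1$: in round $t$ draw independently $w_{a,t}\sim\mathcal{N}\big(\hat r_{a,n_{a,t}},\frac{m\ln t}{n_{a,t}+1}\big)$ and play the $m$ arms with largest $w_{a,t}$; $n_{a,t}$ is the number of plays of $a$ in rounds $1,\dots,t-1$, $\hat r_{a,n_{a,t}}$ its empirical mean ($0$ if unplayed). $\mathcal{F}_{t-1}$ is the history up to the end of round $t-1$. $L:=\frac{16m\ln(T/2)}{25\Delta^2}-1$ and $B_t:=\{a\in[N]\setminus G: n_{a,t}\le L\}$. *)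

theory Defs
  imports "HOL-Probability.Probability"
begin

text \<open>A history of plays: hist s is the set of base arms played in round s (rounds start at 1).
  Arms are {0..<N}.\<close>

definition n_plays :: "(nat \<Rightarrow> nat set) \<Rightarrow> nat \<Rightarrow> nat \<Rightarrow> nat" where
  "n_plays hist a t = card {s \<in> {1..<t}. a \<in> hist s}"

text \<open>Empirical mean of arm a from the rewards observed in rounds 1..t-1; rewards are
  deterministic, the observed reward of arm a is always r a. Zero if unplayed.\<close>
definition emp_mean :: "(nat \<Rightarrow> real) \<Rightarrow> (nat \<Rightarrow> nat set) \<Rightarrow> nat \<Rightarrow> nat \<Rightarrow> real" where
  "emp_mean r hist a t =
     (if n_plays hist a t = 0 then 0
      else (\<Sum>s\<in>{s \<in> {1..<t}. a \<in> hist s}. r a) / real (n_plays hist a t))"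

text \<open>CTS-G with gamma = 1: conditional law of the sample w_{a,t} given F_{t-1},
  i.e. N(hat r_{a,n_{a,t}}, m ln t / (n_{a,t}+1)) (second parameter of normal_density is the
  standard deviation).\<close>
definition ctsg_sample_law :: "nat \<Rightarrow> (nat \<Rightarrow> real) \<Rightarrow> (nat \<Rightarrow> nat set) \<Rightarrow> nat \<Rightarrow> nat \<Rightarrow> real measure" where
  "ctsg_sample_law m r hist a t =
     density lborel (normal_density (emp_mean r hist a t)
        (sqrt (real m * ln (real t) / (real (n_plays hist a t) + 1))))"

end

theory Submission imports Defs "HOL-Analysis.Complex_Transcendental" begin

lemma exp_neg_le:
  fixes y :: real assumes "0 \<le> y"
  shows "exp (- y) \<le> 1 - y + y\<^sup>2 / 2"
proof -
  let ?h = "\<lambda>y::real. exp y * (1 - y + y\<^sup>2 / 2)"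
  have "?h 0 \<le> ?h y"
  proof (rule DERIV_nonneg_imp_nondecreasing[OF assms])
    fix x :: real assume "0 \<le> x" "x \<le> y"
    show "\<exists>d. (?h has_real_derivative d) (at x) \<and> 0 \<le> d"
    proof (intro exI conjI)
      show "(?h has_real_derivative exp x * x\<^sup>2 / 2) (at x)"
        by (auto intro!: derivative_eq_intros simp: power2_eq_square algebra_simps)
      show "0 \<le> exp x * x\<^sup>2 / 2" by simp
    qed
  qed
  then have "1 \<le> exp y * (1 - y + y\<^sup>2 / 2)" by simp
  then have "exp (-y) * 1 \<le> exp (-y) * (exp y * (1 - y + y\<^sup>2 / 2))"
    by (intro mult_left_mono) auto
  then show ?thesis by (simp add: exp_minus field_simps)
qed

lemma poly_int:
  fixes \<sigma> :: real assumes "\<sigma> > 0"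
  defines "p \<equiv> \<lambda>x. (1 - x\<^sup>2 / (2*\<sigma>\<^sup>2) + x^4 / (8*\<sigma>^4)) / sqrt (2*pi*\<sigma>\<^sup>2)"
  shows "integral\<^sup>L lborel (\<lambda>x. indicator {0..\<sigma>} x *\<^sub>R p x) = (103/120) / sqrt (2*pi)"
proof -
  let ?P = "\<lambda>x. (x - x^3 / (6*\<sigma>\<^sup>2) + x^5 / (40*\<sigma>^4)) / sqrt (2*pi*\<sigma>\<^sup>2)"
  have "integral\<^sup>L lborel (\<lambda>x. indicator {0..\<sigma>} x *\<^sub>R p x) = ?P \<sigma> - ?P 0"
  proof (rule integral_FTC_atLeastAtMost)
    show "0 \<le> \<sigma>" using assms by simp
    fix x assume "0 \<le> x" "x \<le> \<sigma>"
    have "(?P has_real_derivative p x) (at x)"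
      unfolding p_def using assms
      by (auto intro!: derivative_eq_intros simp: field_simps power2_eq_square power_numeral_reduce)
    then show "(?P has_vector_derivative p x) (at x within {0..\<sigma>})"
      by (simp add: has_real_derivative_iff_has_vector_derivative has_vector_derivative_at_within)
  next
    show "continuous_on {0..\<sigma>} p" unfolding p_def using assms by (intro continuous_intros) auto
  qed
  also have "\<dots> = (103/120) / sqrt (2*pi)"
    using assms by (simp add: real_sqrt_mult field_simps power_numeral_reduce)
  finally show ?thesis .
qed

lemma gauss_tail:
  fixes \<sigma> :: real assumes sp: "\<sigma> > 0"
  shows "measure (density lborel (normal_density 0 \<sigma>)) {\<sigma>..} \<ge> 0.15"
proof -
  define f where "f = normal_density 0 \<sigma>"
  define I where "I = (\<lambda>A. integral\<^sup>L lborel (\<lambda>x. f x * indicator A x))"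
  have fint: "integrable lborel f" unfolding f_def using sp by simp
  have intA: "integrable lborel (\<lambda>x. f x * indicator A x)" if "A \<in> sets borel" for A
    using integrable_real_mult_indicator[OF _ fint, of A] that by simp
  have ps: "prob_space (density lborel f)" unfolding f_def using sp by (rule prob_space_normal_density)
  have meas: "measure (density lborel f) {\<sigma>..} = I {\<sigma>..}"
  proof -
    have "measure (density lborel f) {\<sigma>..} = integral\<^sup>L (density lborel f) (indicator {\<sigma>..})"
      by simp
    also have "\<dots> = integral\<^sup>L lborel (\<lambda>x. f x *\<^sub>R indicator {\<sigma>..} x)"
      by (rule integral_density) (auto simp: f_def)
    finally show ?thesis by (simp add: I_def)
  qed
  have tot: "I UNIV = 1" unfolding I_def f_def using sp by simp
  have split: "I UNIV = I {..<0} + I {0..<\<sigma>} + I {\<sigma>..}"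
  proof -
    have "I UNIV = integral\<^sup>L lborel (\<lambda>x. (f x * indicator {..<0} x + f x * indicator {0..<\<sigma>} x) + f x * indicator {\<sigma>..} x)"
      unfolding I_def using sp
      by (intro Bochner_Integration.integral_cong) (auto simp: indicator_def)
    also have "\<dots> = I {..<0} + I {0..<\<sigma>} + I {\<sigma>..}"
      unfolding I_def
      by (subst Bochner_Integration.integral_add, (intro Bochner_Integration.integrable_add intA; simp)+)+
         simp
    finally show ?thesis .
  qed
  have refl: "I {..<0} \<le> I {0..<\<sigma>} + I {\<sigma>..}"
  proof -
    have "I {..<0} = integral\<^sup>L lborel (\<lambda>x. f (-x) * indicator {..<0} (-x))"
      unfolding I_def
      by (subst lborel_integral_real_affine[where c="-1" and t=0]) auto
    also have "\<dots> = I {0<..}"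
      unfolding I_def f_def
      by (rule Bochner_Integration.integral_cong) (auto simp: normal_density_def indicator_def)
    also have "\<dots> \<le> I {0..}"
      unfolding I_def
      by (rule integral_mono[OF intA intA]) (auto simp: f_def indicator_def)
    also have "I {0..} = I {0..<\<sigma>} + I {\<sigma>..}"
    proof -
      have "I {0..} = integral\<^sup>L lborel (\<lambda>x. f x * indicator {0..<\<sigma>} x + f x * indicator {\<sigma>..} x)"
        unfolding I_def using sp
        by (intro Bochner_Integration.integral_cong) (auto simp: indicator_def)
      also have "\<dots> = I {0..<\<sigma>} + I {\<sigma>..}"
        unfolding I_def by (rule Bochner_Integration.integral_add) (auto intro!: intA)
      finally show ?thesis .
    qed
    finally show ?thesis .
  qed
  define p where "p = (\<lambda>x. (1 - x\<^sup>2 / (2*\<sigma>\<^sup>2) + x^4 / (8*\<sigma>^4)) / sqrt (2*pi*\<sigma>\<^sup>2))"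
  have pint: "integral\<^sup>L lborel (\<lambda>x. indicator {0..\<sigma>} x *\<^sub>R p x) = (103/120) / sqrt (2*pi)"
    unfolding p_def by (rule poly_int[OF sp])
  have bnd: "I {0..<\<sigma>} \<le> integral\<^sup>L lborel (\<lambda>x. indicator {0..\<sigma>} x *\<^sub>R p x)"
    unfolding I_def
  proof (rule integral_mono)
    show "integrable lborel (\<lambda>x. f x * indicator {0..<\<sigma>} x)" by (auto intro!: intA)
    show "integrable lborel (\<lambda>x. indicator {0..\<sigma>} x *\<^sub>R p x)"
    proof -
      have "continuous_on {0..\<sigma>} p" unfolding p_def using sp by (intro continuous_intros) auto
      then show ?thesis using borel_integrable_atLeastAtMost'[of 0 \<sigma> p] unfolding set_integrable_def by simp
    qed
    fix x
    show "f x * indicator {0..<\<sigma>} x \<le> indicator {0..\<sigma>} x *\<^sub>R p x"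
    proof (cases "0 \<le> x \<and> x < \<sigma>")
      case True
      have "exp (- (x\<^sup>2 / (2*\<sigma>\<^sup>2))) \<le> 1 - x\<^sup>2 / (2*\<sigma>\<^sup>2) + (x\<^sup>2 / (2*\<sigma>\<^sup>2))\<^sup>2 / 2"
        by (rule exp_neg_le) simp
      also have "\<dots> = 1 - x\<^sup>2 / (2*\<sigma>\<^sup>2) + x^4 / (8*\<sigma>^4)"
        by (simp add: power2_eq_square power_numeral_reduce field_simps)
      finally have "exp (- (x\<^sup>2 / (2*\<sigma>\<^sup>2))) / sqrt (2*pi*\<sigma>\<^sup>2) \<le> (1 - x\<^sup>2 / (2*\<sigma>\<^sup>2) + x^4 / (8*\<sigma>^4)) / sqrt (2*pi*\<sigma>\<^sup>2)"
        by (rule divide_right_mono) simp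
      then show ?thesis using True by (simp add: f_def p_def normal_density_def)
    next
      case False
      then show ?thesis by (auto simp: f_def indicator_def p_def)
    qed
  qed
  have pi: "(103/120) / sqrt (2*pi) \<le> (7/20::real)"
  proof -
    have "(2.4524::real)\<^sup>2 \<le> 2 * pi" using pi_approx by (simp add: power2_eq_square)
    then have "2.4524 \<le> sqrt (2*pi)" by (rule real_le_rsqrt)
    then show ?thesis by (simp add: field_simps)
  qed
  have "I {\<sigma>..} \<ge> 3/20" using tot split refl bnd pint pi by linarith
  then show ?thesis using meas by (simp add: f_def)
qed

lemma gauss_tail2:
  fixes \<sigma> \<tau> :: real assumes sp: "\<sigma> > 0" and "\<tau> \<le> \<sigma>"
  shows "measure (density lborel (normal_density 0 \<sigma>)) {\<tau>..} \<ge> 0.15"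
proof -
  interpret prob_space "density lborel (normal_density 0 \<sigma>)"
    using sp by (rule prob_space_normal_density)
  have "measure (density lborel (normal_density 0 \<sigma>)) {\<sigma>..} \<le> measure (density lborel (normal_density 0 \<sigma>)) {\<tau>..}"
    using assms(2) by (intro finite_measure_mono) auto
  then show ?thesis using gauss_tail[OF sp] by linarith
qed

theorem lemma10:
  fixes N m T t a :: nat and G :: "nat set" and hist :: "nat \<Rightarrow> nat set"
    and \<Delta> L \<tau> :: real and r :: "nat \<Rightarrow> real"
  assumes "m \<ge> 1" and "N \<ge> 400 * m"
    and "G \<subseteq> {..<N}" and "card G = m"
    and "real T > 16 / 25 * real N * ln (real T)"
    and "\<Delta> = 4 / 5 * sqrt (real N * ln (real T) / real T)"
    and "r = (\<lambda>b. if b \<in> G then \<Delta> else 0)"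
    and "L = 16 * real m * ln (real T / 2) / (25 * \<Delta>\<^sup>2) - 1"
    and "\<And>s. hist s \<subseteq> {..<N} \<and> card (hist s) = m"
    and "real t > real T / 2" and "t \<le> T"
    and "a \<in> {..<N} - G" and "real (n_plays hist a t) \<le> L"
    and "\<tau> = \<Delta> + \<Delta> / 4"
  shows "measure (ctsg_sample_law m r hist a t) {\<tau>..} \<ge> 0.15"
proof -
  define n where "n = real (n_plays hist a t)"
  have n0: "n \<ge> 0" by (simp add: n_def)
  have ra: "r a = 0" using assms(7,12) by simp
  have em: "emp_mean r hist a t = 0" unfolding emp_mean_def ra by simp
  have Npos: "real N \<ge> 400" using assms(1,2) by linarith
  have T0: "T \<noteq> 0" using assms(5) by (cases "T = 0") auto
  have T1: "T \<noteq> 1"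
  proof
    assume "T = 1"
    then have "\<Delta> = 0" "L = -1" using assms(6,8) by simp_all
    then show False using assms(13) n0 n_def by simp
  qed
  have T2: "real T \<ge> 2" using T0 T1 by linarith
  have lnT: "ln (real T) > 0" using T2 by simp
  have "real N * ln (real T) / real T > 0" using Npos lnT T2 by simp
  then have "sqrt (real N * ln (real T) / real T) > 0" by simp
  then have Dpos: "\<Delta> > 0" using assms(6) by linarith
  have lnT2: "ln (real T / 2) > 0"
  proof (rule ccontr)
    assume "\<not> ?thesis"
    then have "16 * real m * ln (real T / 2) / (25 * \<Delta>\<^sup>2) \<le> 0"
      using Dpos by (intro divide_nonpos_pos mult_nonneg_nonpos) auto
    then have "L \<le> -1" using assms(8) by simp
    then show False using assms(13) n0 n_def by simp
  qed
  have tT: "ln (real T / 2) \<le> ln (real t)"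
    using T2 assms(10) by (subst ln_le_cancel_iff) auto
  have n1: "n + 1 \<le> 16 * real m * ln (real T / 2) / (25 * \<Delta>\<^sup>2)"
    using assms(8,13) n_def by simp
  have "(n + 1) * (25 * \<Delta>\<^sup>2) \<le> 16 * real m * ln (real T / 2)"
    using n1 Dpos by (simp add: pos_le_divide_eq)
  also have "\<dots> \<le> 16 * real m * ln (real t)" using tT by (simp add: mult_left_mono)
  finally have key: "(n + 1) * (25 * \<Delta>\<^sup>2) \<le> 16 * real m * ln (real t)" .
  define \<sigma> where "\<sigma> = sqrt (real m * ln (real t) / (n + 1))"
  have lnt: "ln (real t) > 0" using tT lnT2 by linarith
  have sp: "\<sigma> > 0" unfolding \<sigma>_def using lnt assms(1) n0 by simp
  have "\<tau>\<^sup>2 \<le> real m * ln (real t) / (n + 1)"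
  proof -
    have "\<tau>\<^sup>2 = 25 * \<Delta>\<^sup>2 / 16" unfolding assms(14) by (simp add: power2_eq_square field_simps)
    then have "\<tau>\<^sup>2 * (n + 1) = (n + 1) * (25 * \<Delta>\<^sup>2) / 16" by simp
    then have "\<tau>\<^sup>2 * (n + 1) \<le> real m * ln (real t)" using key by linarith
    then show ?thesis using n0 by (simp add: pos_le_divide_eq)
  qed
  then have "\<tau> \<le> \<sigma>" unfolding \<sigma>_def by (rule real_le_rsqrt)
  have law: "ctsg_sample_law m r hist a t = density lborel (normal_density 0 \<sigma>)"
    unfolding ctsg_sample_law_def em \<sigma>_def n_def by simp
  show ?thesis unfolding law by (rule gauss_tail2[OF sp \<open>\<tau> \<le> \<sigma>\<close>])
qed

end
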